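(* Let $f:\mathbb{R}^n_{>0}\to\mathbb{R}^n_{>0}$ be order-preserving and homogeneous. If $\mathcal{G}(f)$ has a unique final class $C$ and $r(f^{[n]\setminus C}_0)<r(f)$, then the eigenspace $E(f)$ is nonempty and bounded in $(\mathbb{R}^n_{>0},d_H)$.
   Context: $[n]=\{1,\dots,n\}$; entrywise order. Order-preserving: $x\le y\Rightarrow f(x)\le f(y)$; homogeneous: $f(tx)=tf(x)$ for $t>0$. $d_H(x,y)=\log\max_{i,j}\frac{y_ix_j}{x_iy_j}$ on $\mathbb{R}^n_{>0}$; $E(f)$ is the set of $x\in\mathbb{R}^n_{>0}$ with $f(x)=\mu x$ for some $\mu$. $f$ extends continuously to an order-preserving homogeneous map on $\mathbb{R}^n_{\ge0}$, also denoted $f$. $P^J_0(x)_j=x_j$ for $j\in J$ and $0$ otherwise; $f^J_0=P^J_0fP^J_0$. For $g$ order-preserving homogeneous on $\mathbb{R}^n_{\ge 0}$, $r(g)=\inf_{x\in\mathbb{R}^n_{>0}}\max_i g(x)_i/x_i$ (and $r(f)$ is defined the same way). $\mathcal{G}(f)$ is the directed graph with vertices $[n]$ and an arc from $i$ to $j$ when $\lim_{t\to\infty}f(\exp(te_{\{j\}}))_i=\infty$, where $e_{\{j\}}$ is the $j$-th standard basis vector and $\exp$ is entrywise. A final class is a strongly connected component of $\mathcal{G}(f)$ with no arcs leaving it. *)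

theory Defs
  imports "HOL-Analysis.Analysis"
begin

text \<open>Vectors in R^n are modelled as real^'n for a finite index type 'n (so [n] = UNIV).
  All orderings are written out entrywise.\<close>

definition pos_vec :: "real^'n \<Rightarrow> bool" where
  "pos_vec x \<longleftrightarrow> (\<forall>i. 0 < x $ i)"

definition order_preserving_pos :: "(real^'n \<Rightarrow> real^'n) \<Rightarrow> bool" where
  "order_preserving_pos f \<longleftrightarrow>
     (\<forall>x y. pos_vec x \<and> pos_vec y \<and> (\<forall>i. x $ i \<le> y $ i) \<longrightarrow> (\<forall>i. f x $ i \<le> f y $ i))"

definition homogeneous_pos :: "(real^'n \<Rightarrow> real^'n) \<Rightarrow> bool" where
  "homogeneous_pos f \<longleftrightarrow> (\<forall>x t. pos_vec x \<and> 0 < t \<longrightarrow> f (t *\<^sub>R x) = t *\<^sub>R f x)"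

text \<open>The continuous extension of f to the closed cone: for x \<ge> 0,
  f(x) = inf { f(y) : y > x entrywise, y positive } (entrywise infimum).\<close>
definition ext_cone :: "(real^'n \<Rightarrow> real^'n) \<Rightarrow> real^'n \<Rightarrow> real^'n" where
  "ext_cone f x = (\<chi> i. INF y \<in> {y. pos_vec y \<and> (\<forall>k. x $ k < y $ k)}. f y $ i)"

definition proj0 :: "'n set \<Rightarrow> real^'n \<Rightarrow> real^'n" where
  "proj0 J x = (\<chi> j. if j \<in> J then x $ j else 0)"

text \<open>f^J_0 = P^J_0 f P^J_0 (with f extended to the closed cone).\<close>
definition trunc0 :: "(real^'n \<Rightarrow> real^'n) \<Rightarrow> 'n set \<Rightarrow> real^'n \<Rightarrow> real^'n" where
  "trunc0 f J = (\<lambda>x. proj0 J (ext_cone f (proj0 J x)))"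

definition cw_radius :: "(real^'n \<Rightarrow> real^'n) \<Rightarrow> real" where
  "cw_radius g = (INF x \<in> {x. pos_vec x}. Max (range (\<lambda>i. g x $ i / x $ i)))"

definition graph_arc :: "(real^'n \<Rightarrow> real^'n) \<Rightarrow> 'n \<Rightarrow> 'n \<Rightarrow> bool" where
  "graph_arc f i j \<longleftrightarrow>
     filterlim (\<lambda>t. f (\<chi> k. if k = j then exp t else 1) $ i) at_top at_top"

definition final_class :: "(real^'n \<Rightarrow> real^'n) \<Rightarrow> 'n set \<Rightarrow> bool" where
  "final_class f C \<longleftrightarrow>
     C \<noteq> {} \<and>
     (\<forall>i\<in>C. \<forall>j\<in>C. (graph_arc f)\<^sup>*\<^sup>* i j) \<and>
     (\<forall>i\<in>C. \<forall>j. (graph_arc f)\<^sup>*\<^sup>* i j \<and> (graph_arc f)\<^sup>*\<^sup>* j i \<longrightarrow> j \<in> C) \<and>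
     (\<forall>i\<in>C. \<forall>j. graph_arc f i j \<longrightarrow> j \<in> C)"

definition eigenspace_pos :: "(real^'n \<Rightarrow> real^'n) \<Rightarrow> (real^'n) set" where
  "eigenspace_pos f = {x. pos_vec x \<and> (\<exists>\<mu>. f x = \<mu> *\<^sub>R x)}"

definition hilbert_dist :: "real^'n \<Rightarrow> real^'n \<Rightarrow> real" where
  "hilbert_dist x y = ln (Max {(y $ i * x $ j) / (x $ i * y $ j) | i j. True})"

end

theory Submission
  imports Defs
begin

locale ophom =
  fixes f :: "real^'n \<Rightarrow> real^'n"
  assumes fpos: "\<And>x. pos_vec x \<Longrightarrow> pos_vec (f x)"
  and fmono: "\<And>x y i. pos_vec x \<Longrightarrow> pos_vec y \<Longrightarrow> (\<And>k. x$k \<le> y$k) \<Longrightarrow> f x $ i \<le> f y $ i"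
  and fhom: "\<And>x t. pos_vec x \<Longrightarrow> 0 < t \<Longrightarrow> f (t *\<^sub>R x) = t *\<^sub>R f x"
begin

lemma pos_scale: "pos_vec x \<Longrightarrow> 0 < t \<Longrightarrow> pos_vec (t *\<^sub>R x)"
  by (simp add: pos_vec_def)

lemma cw_set_bdd: "bdd_below ((\<lambda>x. Max (range (\<lambda>i. f x $ i / x $ i))) ` {x. pos_vec x})"
proof (rule bdd_belowI[where m=0])
  fix y assume "y \<in> (\<lambda>x. Max (range (\<lambda>i. f x $ i / x $ i))) ` {x. pos_vec x}"
  then obtain x where x: "pos_vec x" "y = Max (range (\<lambda>i. f x $ i / x $ i))" by auto
  obtain i0 :: 'n where True by simp
  have "0 \<le> f x $ i0 / x $ i0" using x fpos[OF x(1)] by (simp add: pos_vec_def less_imp_le)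
  also have "\<dots> \<le> y" unfolding x(2) by (intro Max_ge) auto
  finally show "0 \<le> y" .
qed

lemma cw_upper:
  assumes "pos_vec u" "\<And>i. f u $ i \<le> l * u $ i"
  shows "cw_radius f \<le> l"
proof -
  have "cw_radius f \<le> Max (range (\<lambda>i. f u $ i / u $ i))"
    unfolding cw_radius_def using assms(1) by (intro cInf_lower cw_set_bdd) auto
  also have "\<dots> \<le> l"
  proof (subst Max_le_iff, auto)
    fix i show "f u $ i / u $ i \<le> l" using assms by (simp add: pos_vec_def divide_le_eq)
  qed
  finally show ?thesis .
qed

lemma cw_lower:
  assumes u: "pos_vec u" and le: "\<And>i. m * u $ i \<le> f u $ i"
  shows "m \<le> cw_radius f"
  unfolding cw_radius_def
proof (rule cInf_greatest)
  show "(\<lambda>x. Max (range (\<lambda>i. f x $ i / x $ i))) ` {x. pos_vec x} \<noteq> {}" using u by auto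
  fix s assume "s \<in> (\<lambda>x. Max (range (\<lambda>i. f x $ i / x $ i))) ` {x. pos_vec x}"
  then obtain y where y: "pos_vec y" "s = Max (range (\<lambda>i. f y $ i / y $ i))" by auto
  obtain k where k: "\<And>l. y $ k / u $ k \<le> y $ l / u $ l"
  proof -
    obtain mm where mm: "mm \<in> range (\<lambda>l. y $ l / u $ l)" "\<not>(\<exists>z\<in>range (\<lambda>l. y $ l / u $ l). z < mm)"
      using ex_min_if_finite[of "range (\<lambda>l. y $ l / u $ l)"] by auto
    then obtain k where "mm = y $ k / u $ k" by auto
    with mm(2) show ?thesis by (intro that[of k]) (auto simp: not_less)
  qed
  define c where "c = y $ k / u $ k"
  have c0: "0 < c" using u y by (simp add: c_def pos_vec_def)
  have cu: "c * u $ l \<le> y $ l" for l using k[of l] u by (simp add: c_def pos_vec_def le_divide_eq)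
  have "f (c *\<^sub>R u) $ k \<le> f y $ k"
    by (rule fmono) (use cu c0 u y pos_scale in auto)
  hence "c * f u $ k \<le> f y $ k" using fhom[OF u c0] by simp
  moreover have "c * (m * u $ k) \<le> c * f u $ k" using le[of k] c0 by simp
  moreover have "c * (m * u $ k) = m * y $ k" using u unfolding c_def pos_vec_def
    by (metis nonzero_mult_div_cancel_right order_less_irrefl times_divide_eq_left mult.commute)
  ultimately have "m * y $ k \<le> f y $ k" by linarith
  hence "m \<le> f y $ k / y $ k" using y by (simp add: pos_vec_def le_divide_eq)
  also have "\<dots> \<le> s" unfolding y(2) by (intro Max_ge) auto
  finally show "m \<le> s" .
qed


lemma fcont:
  assumes x: "pos_vec x"
  shows "isCont f x"
  unfolding continuous_at_eps_delta
proof (intro allI impI)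
  fix e :: real assume e: "0 < e"
  define mx where "mx = Min (range (\<lambda>i. x $ i))"
  have mx0: "0 < mx" unfolding mx_def using x by (simp add: pos_vec_def)
  have mxle: "mx \<le> x $ i" for i unfolding mx_def by (intro Min_le) auto
  define N where "N = norm (f x) + 1"
  have N0: "0 < N" unfolding N_def by (simp add: add_nonneg_pos)
  define \<delta> where "\<delta> = min (1/2) (e / (2*N))"
  have d0: "0 < \<delta>" "\<delta> \<le> 1/2" "\<delta> \<le> e / (2*N)" using e N0 by (auto simp: \<delta>_def)
  show "\<exists>d>0. \<forall>y. dist y x < d \<longrightarrow> dist (f y) (f x) < e"
  proof (intro exI[of _ "\<delta> * mx"] conjI allI impI)
    show "0 < \<delta> * mx" using d0 mx0 by simp
    fix y assume dy: "dist y x < \<delta> * mx"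
    have cy: "\<bar>y $ i - x $ i\<bar> < \<delta> * x $ i" for i
    proof -
      have "\<bar>y $ i - x $ i\<bar> = \<bar>(y - x) $ i\<bar>" by simp
      also have "\<dots> \<le> norm (y - x)" by (rule component_le_norm_cart)
      also have "\<dots> < \<delta> * mx" using dy by (simp add: dist_norm)
      also have "\<dots> \<le> \<delta> * x $ i" using mxle[of i] d0 by (simp add: mult_left_mono)
      finally show ?thesis .
    qed
    have lo: "(1 - \<delta>) * x $ i \<le> y $ i" and hi: "y $ i \<le> (1 + \<delta>) * x $ i" for i
      using cy[of i] by (auto simp: algebra_simps abs_less_iff)
    have xi: "0 < x $ i" for i using x by (simp add: pos_vec_def)
    have ypos: "pos_vec y" unfolding pos_vec_def
    proof
      fix i have "0 < (1 - \<delta>) * x $ i" using d0 xi[of i] by simp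
      thus "0 < y $ i" using lo[of i] by linarith
    qed
    have t1: "0 < 1 - \<delta>" "0 < 1 + \<delta>" using d0 by auto
    have flo: "(1 - \<delta>) * f x $ i \<le> f y $ i" for i
    proof -
      have "f ((1 - \<delta>) *\<^sub>R x) $ i \<le> f y $ i"
        by (rule fmono) (use lo ypos pos_scale[OF x t1(1)] in auto)
      thus ?thesis using fhom[OF x t1(1)] by simp
    qed
    have fhi: "f y $ i \<le> (1 + \<delta>) * f x $ i" for i
    proof -
      have "f y $ i \<le> f ((1 + \<delta>) *\<^sub>R x) $ i"
        by (rule fmono) (use hi ypos pos_scale[OF x t1(2)] in auto)
      thus ?thesis using fhom[OF x t1(2)] by simp
    qed
    have fxp: "0 < f x $ i" for i using fpos[OF x] by (simp add: pos_vec_def)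
    have "norm (f y - f x) \<le> norm (\<delta> *\<^sub>R f x)"
    proof (rule norm_le_componentwise_cart)
      fix i
      show "norm ((f y - f x) $ i) \<le> norm ((\<delta> *\<^sub>R f x) $ i)"
        using flo[of i] fhi[of i] fxp[of i] d0 by (auto simp: algebra_simps abs_le_iff)
    qed
    also have "\<dots> = \<delta> * norm (f x)" using d0 by simp
    also have "\<dots> \<le> e / (2*N) * norm (f x)" using d0(3) by (intro mult_right_mono) auto
    also have "\<dots> < e"
    proof -
      have "0 \<le> norm (f x)" by simp
      hence "norm (f x) < 2 * N" unfolding N_def by (smt (verit))
      hence "e / (2*N) * norm (f x) < e / (2*N) * (2*N)" using e N0 by (intro mult_strict_left_mono) auto
      thus ?thesis using N0 by simp
    qed
    finally show "dist (f y) (f x) < e" by (simp add: dist_norm)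
  qed
qed

end

lemma reach_final:
  fixes f :: "real^'n \<Rightarrow> real^'n"
  assumes uniq: "\<forall>D. final_class f D \<longrightarrow> D = C"
  shows "\<exists>c\<in>C. (graph_arc f)\<^sup>*\<^sup>* k c"
proof -
  define R where "R j = {l. (graph_arc f)\<^sup>*\<^sup>* j l}" for j
  obtain j where j: "j \<in> R k" "\<And>j'. j' \<in> R k \<Longrightarrow> card (R j) \<le> card (R j')"
    using ex_has_least_nat[of "\<lambda>j. j \<in> R k" k "\<lambda>j. card (R j)"] by (auto simp: R_def)
  have eq: "R l = R j" if l: "l \<in> R j" for l
  proof -
    have sub: "R l \<subseteq> R j" using l by (auto simp: R_def)
    have "l \<in> R k" using l j(1) by (auto simp: R_def)
    hence "card (R j) \<le> card (R l)" by (rule j(2))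
    moreover have "card (R l) \<le> card (R j)" using sub by (intro card_mono) auto
    ultimately show ?thesis using sub by (intro card_subset_eq) auto
  qed
  have "final_class f (R j)"
    unfolding final_class_def
  proof (intro conjI ballI allI impI)
    show "R j \<noteq> {}" by (auto simp: R_def)
    fix a assume a: "a \<in> R j"
    { fix b assume "b \<in> R j"
      thus "(graph_arc f)\<^sup>*\<^sup>* a b" using eq[OF a] by (auto simp: R_def) }
    { fix b assume "(graph_arc f)\<^sup>*\<^sup>* a b \<and> (graph_arc f)\<^sup>*\<^sup>* b a"
      thus "b \<in> R j" using a by (auto simp: R_def) }
    { fix b assume "graph_arc f a b"
      thus "b \<in> R j" using a by (auto simp: R_def) }
  qed
  hence "R j = C" using uniq by auto
  moreover have "j \<in> R j" by (auto simp: R_def)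
  ultimately show ?thesis using j(1) by (auto simp: R_def)
qed


context ophom begin

definition goodv :: "real \<Rightarrow> real^'n \<Rightarrow> real \<Rightarrow> bool" where
  "goodv L u m \<longleftrightarrow> 0 \<le> L \<and> pos_vec u \<and> (\<forall>k. f u $ k \<le> L * u $ k) \<and> 0 < m \<and> (\<forall>k. m \<le> u $ k)"

lemma arc_bound:
  assumes arc: "graph_arc f i j"
  shows "\<exists>B'. \<forall>u m. goodv L u m \<and> u $ i \<le> B * m \<longrightarrow> u $ j \<le> B' * m"
proof -
  have "eventually (\<lambda>t. L * B < f (\<chi> k. if k = j then exp t else 1) $ i) at_top"
    using arc unfolding graph_arc_def filterlim_at_top_dense by auto
  then obtain T where T: "\<And>t. t \<ge> T \<Longrightarrow> L * B < f (\<chi> k. if k = j then exp t else 1) $ i"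
    unfolding eventually_at_top_linorder by auto
  show ?thesis
  proof (intro exI[of _ "exp T"] allI impI)
    fix u m assume H: "goodv L u m \<and> u $ i \<le> B * m"
    hence u: "pos_vec u" and fu: "\<And>k. f u $ k \<le> L * u $ k" and m0: "0 < m"
      and mu: "\<And>k. m \<le> u $ k" and ui: "u $ i \<le> B * m" by (auto simp: goodv_def)
    show "u $ j \<le> exp T * m"
    proof (rule ccontr)
      assume "\<not> u $ j \<le> exp T * m"
      hence gt: "exp T < u $ j / m" using m0 by (simp add: less_divide_eq)
      define t where "t = ln (u $ j / m)"
      have qpos: "0 < u $ j / m" using gt by (meson exp_gt_zero less_trans)
      have et: "exp t = u $ j / m" using qpos by (simp add: t_def)
      have tT: "T \<le> t" using gt qpos unfolding t_def by (metis less_imp_le ln_exp ln_less_cancel_iff exp_gt_zero)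
      define v where "v = (\<chi> k. if k = j then exp t else (1::real))"
      have vpos: "pos_vec v" by (simp add: v_def pos_vec_def)
      have mv: "(m *\<^sub>R v) $ k \<le> u $ k" for k
        using mu[of k] m0 by (auto simp: v_def et)
      have "f (m *\<^sub>R v) $ i \<le> f u $ i"
        by (rule fmono) (use mv u vpos pos_scale m0 in auto)
      hence "m * f v $ i \<le> L * u $ i" using fhom[OF vpos m0] fu[of i] by simp
      also have "L * u $ i \<le> L * (B * m)" using ui H by (intro mult_left_mono) (auto simp: goodv_def)
      finally have "m * f v $ i \<le> m * (L * B)" by (simp add: algebra_simps)
      hence "f v $ i \<le> L * B" using m0 by simp
      moreover have "L * B < f v $ i" using T[OF tT] by (simp add: v_def)
      ultimately show False by simp
    qed
  qed
qed


lemma path_bound: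
  assumes "(graph_arc f)\<^sup>*\<^sup>* i j"
  shows "\<forall>B. \<exists>B'. \<forall>u m. goodv L u m \<and> u $ i \<le> B * m \<longrightarrow> u $ j \<le> B' * m"
  using assms
proof (induction rule: rtranclp_induct)
  case base
  then show ?case by blast
next
  case (step y z)
  show ?case
  proof
    fix B
    obtain B1 where B1: "\<forall>u m. goodv L u m \<and> u $ i \<le> B * m \<longrightarrow> u $ y \<le> B1 * m"
      using step.IH by blast
    obtain B2 where B2: "\<forall>u m. goodv L u m \<and> u $ y \<le> B1 * m \<longrightarrow> u $ z \<le> B2 * m"
      using arc_bound[OF step.hyps(2)] by blast
    show "\<exists>B'. \<forall>u m. goodv L u m \<and> u $ i \<le> B * m \<longrightarrow> u $ z \<le> B' * m"
      using B1 B2 by blast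
  qed
qed

lemma reach_C_bound:
  assumes fc: "final_class f C" and uniq: "\<forall>D. final_class f D \<longrightarrow> D = C"
  shows "\<exists>B. \<forall>k c u m. c \<in> C \<and> goodv L u m \<and> u $ k \<le> m \<longrightarrow> u $ c \<le> B * m"
proof -
  have "\<forall>k c. \<exists>B'. c \<in> C \<longrightarrow> (\<forall>u m. goodv L u m \<and> u $ k \<le> 1 * m \<longrightarrow> u $ c \<le> B' * m)"
  proof (intro allI)
    fix k c
    show "\<exists>B'. c \<in> C \<longrightarrow> (\<forall>u m. goodv L u m \<and> u $ k \<le> 1 * m \<longrightarrow> u $ c \<le> B' * m)"
    proof (cases "c \<in> C")
      case True
      obtain c0 where c0: "c0 \<in> C" "(graph_arc f)\<^sup>*\<^sup>* k c0" using reach_final[OF uniq] by blast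
      have "(graph_arc f)\<^sup>*\<^sup>* c0 c" using fc c0(1) True unfolding final_class_def by blast
      hence "(graph_arc f)\<^sup>*\<^sup>* k c" using c0(2) by simp
      from path_bound[OF this] show ?thesis by blast
    qed simp
  qed
  then obtain Bf where Bf: "\<And>k c u m. c \<in> C \<Longrightarrow> goodv L u m \<Longrightarrow> u $ k \<le> 1 * m \<Longrightarrow> u $ c \<le> Bf k c * m"
    by metis
  define B where "B = Max (range (\<lambda>p. Bf (fst p) (snd p)))"
  have BB: "Bf k c \<le> B" for k c unfolding B_def by (rule Max_ge) (auto intro: image_eqI[of _ _ "(k,c)"])
  show ?thesis
  proof (intro exI[of _ B] allI impI)
    fix k c u m assume H: "c \<in> C \<and> goodv L u m \<and> u $ k \<le> m"
    hence "u $ c \<le> Bf k c * m" using Bf by auto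
    also have "\<dots> \<le> B * m" using BB[of k c] H by (intro mult_right_mono) (auto simp: goodv_def)
    finally show "u $ c \<le> B * m" .
  qed
qed


definition one :: "real^'n" where "one = (\<chi> i. 1)"

lemma one_pos: "pos_vec one" by (simp add: one_def pos_vec_def)

lemma rho_pos: "0 < cw_radius f"
proof -
  define m where "m = Min (range (\<lambda>i. f one $ i))"
  have m0: "0 < m" unfolding m_def using fpos[OF one_pos] by (simp add: pos_vec_def)
  have "m * one $ i \<le> f one $ i" for i unfolding m_def by (simp add: one_def)
  hence "m \<le> cw_radius f" by (intro cw_lower[OF one_pos])
  thus ?thesis using m0 by simp
qed

lemma J_witness:
  assumes rlt: "cw_radius (trunc0 f (UNIV - C)) < cw_radius f"
  shows "\<exists>w \<sigma>. pos_vec w \<and> 0 \<le> \<sigma> \<and> \<sigma> < cw_radius f \<and> (\<forall>i. i \<notin> C \<longrightarrow> f w $ i \<le> \<sigma> * w $ i)"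
proof (cases "UNIV - C = {}")
  case True
  then show ?thesis using rho_pos one_pos by (intro exI[of _ one] exI[of _ 0]) auto
next
  case False
  define J where "J = UNIV - C"
  define g where "g = trunc0 f J"
  define \<rho> where "\<rho> = cw_radius f"
  have "\<exists>s \<in> (\<lambda>x. Max (range (\<lambda>i. g x $ i / x $ i))) ` {x. pos_vec x}. s < \<rho>"
  proof (rule cInf_lessD)
    show "Inf ((\<lambda>x. Max (range (\<lambda>i. g x $ i / x $ i))) ` {x. pos_vec x}) < \<rho>"
      using rlt unfolding g_def J_def \<rho>_def by (simp add: cw_radius_def[of "trunc0 f (UNIV - C)"])
  qed (use one_pos in auto)
  then obtain z where z: "pos_vec z" and s1: "Max (range (\<lambda>i. g z $ i / z $ i)) < \<rho>" by auto
  define \<sigma>1 where "\<sigma>1 = Max (range (\<lambda>i. g z $ i / z $ i))"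
  define \<sigma> where "\<sigma> = max 0 ((\<sigma>1 + \<rho>) / 2)"
  have rp: "0 < \<rho>" using rho_pos by (simp add: \<rho>_def)
  have s1': "\<sigma>1 < \<rho>" unfolding \<sigma>1_def by (rule s1)
  have sig1: "0 \<le> \<sigma>" unfolding \<sigma>_def by simp
  have sig2: "\<sigma> < \<rho>" using s1' rp unfolding \<sigma>_def by (simp add: field_simps)
  have "\<sigma>1 < (\<sigma>1 + \<rho>) / 2" using s1' by (simp add: field_simps)
  hence sig3: "\<sigma>1 < \<sigma>" unfolding \<sigma>_def by (rule less_le_trans) simp
  note sig = sig1 sig2 sig3
  have zp: "0 < z $ k" for k using z by (simp add: pos_vec_def)
  define Y where "Y = {y. pos_vec y \<and> (\<forall>k. proj0 J z $ k < y $ k)}"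
  have Yne: "Y \<noteq> {}"
  proof -
    have "z + one \<in> Y" unfolding Y_def using zp
      by (auto simp: pos_vec_def one_def proj0_def add_pos_pos less_imp_le)
    thus ?thesis by auto
  qed
  have "\<exists>y. y \<in> Y \<and> f y $ i < \<sigma> * z $ i" if i: "i \<in> J" for i
  proof -
    have "g z $ i / z $ i \<le> \<sigma>1" unfolding \<sigma>1_def by (intro Max_ge) auto
    hence "g z $ i < \<sigma> * z $ i" using sig zp[of i] by (simp add: divide_le_eq) (smt (verit) mult_strict_right_mono zp)
    moreover have "g z $ i = Inf ((\<lambda>y. f y $ i) ` Y)"
      using i by (simp add: g_def trunc0_def proj0_def ext_cone_def Y_def)
    ultimately have "Inf ((\<lambda>y. f y $ i) ` Y) < \<sigma> * z $ i" by simp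
    then obtain s where "s \<in> (\<lambda>y. f y $ i) ` Y" "s < \<sigma> * z $ i" using cInf_lessD[of "(\<lambda>y. f y $ i) ` Y" "\<sigma> * z $ i"] Yne by blast
    thus ?thesis by auto
  qed
  then obtain yy where yy: "\<And>i. i \<in> J \<Longrightarrow> yy i \<in> Y \<and> f (yy i) $ i < \<sigma> * z $ i" by metis
  have Jne: "J \<noteq> {}" "finite J" using False by (auto simp: J_def)
  define w where "w = (\<chi> k. Min ((\<lambda>i. yy i $ k) ` J))"
  have wle: "w $ k \<le> yy i $ k" if "i \<in> J" for i k unfolding w_def using that Jne by (auto intro: Min_le)
  have wgt: "proj0 J z $ k < w $ k" for k unfolding w_def using Jne yy by (auto simp: Y_def)
  have wpos: "pos_vec w" unfolding pos_vec_def
  proof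
    fix k have "0 \<le> proj0 J z $ k" using zp by (simp add: proj0_def less_imp_le)
    thus "0 < w $ k" using wgt[of k] by linarith
  qed
  show ?thesis
  proof (intro exI[of _ w] exI[of _ \<sigma>] conjI allI impI)
    fix i assume "i \<notin> C"
    hence i: "i \<in> J" by (simp add: J_def)
    have "f w $ i \<le> f (yy i) $ i" using yy[OF i] wle[OF i] wpos by (intro fmono) (auto simp: Y_def)
    also have "\<dots> < \<sigma> * z $ i" using yy[OF i] by simp
    also have "\<dots> \<le> \<sigma> * w $ i" using wgt[of i] i sig by (intro mult_left_mono) (auto simp: proj0_def)
    finally show "f w $ i \<le> \<sigma> * w $ i" by simp
  qed (use wpos sig in \<open>auto simp: \<rho>_def\<close>)
qed


lemma J_bound:
  assumes w: "pos_vec w" and s0: "0 \<le> \<sigma>" and sr: "\<sigma> < cw_radius f"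
    and wJ: "\<forall>i. i \<notin> C \<longrightarrow> f w $ i \<le> \<sigma> * w $ i" and Cne: "C \<noteq> {}" and L0: "0 \<le> L"
  shows "\<exists>A W. 0 \<le> A \<and> 0 \<le> W \<and> (\<forall>u lam \<epsilon>. pos_vec u \<and> 0 \<le> \<epsilon> \<and> cw_radius f \<le> lam \<and> lam \<le> L
      \<and> (\<forall>k. f u $ k = lam * (u $ k - \<epsilon>)) \<longrightarrow> (\<exists>c\<in>C. \<forall>l. u $ l \<le> A * \<epsilon> + W * u $ c))"
proof -
  define \<rho> where "\<rho> = cw_radius f"
  have wp: "0 < w $ k" for k using w by (simp add: pos_vec_def)
  define W where "W = Max (range (\<lambda>p. w $ fst p / w $ snd p))"
  have WW: "w $ l / w $ k \<le> W" for l k unfolding W_def by (rule Max_ge) (auto intro: image_eqI[of _ _ "(l,k)"])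
  have W0: "0 \<le> W" using WW[of undefined undefined] wp[of undefined] by simp
  have dpos: "0 < \<rho> - \<sigma>" using sr by (simp add: \<rho>_def)
  define A where "A = W * L / (\<rho> - \<sigma>)"
  have A0: "0 \<le> A" unfolding A_def using W0 L0 dpos by simp
  show ?thesis
  proof (rule exI[of _ A], rule exI[of _ W], intro conjI allI impI A0 W0)
    fix u lam \<epsilon> assume H: "pos_vec u \<and> 0 \<le> \<epsilon> \<and> cw_radius f \<le> lam \<and> lam \<le> L \<and> (\<forall>k. f u $ k = lam * (u $ k - \<epsilon>))"
    hence u: "pos_vec u" and e0: "0 \<le> \<epsilon>" and lr: "\<rho> \<le> lam" and lL: "lam \<le> L"
      and fu: "\<And>k. f u $ k = lam * (u $ k - \<epsilon>)" by (auto simp: \<rho>_def)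
    have up: "0 < u $ k" for k using u by (simp add: pos_vec_def)
    define t where "t = Max (range (\<lambda>l. u $ l / w $ l))"
    have "t \<in> range (\<lambda>l. u $ l / w $ l)" unfolding t_def by (rule Max_in) auto
    then obtain k where k: "t = u $ k / w $ k" by auto
    have t0: "0 < t" using up[of k] wp[of k] k by simp
    have utw: "u $ l \<le> t * w $ l" for l
    proof -
      have "u $ l / w $ l \<le> t" unfolding t_def by (rule Max_ge) auto
      thus ?thesis using wp[of l] by (simp add: divide_le_eq)
    qed
    have tk: "t * w $ k = u $ k" using k wp[of k] by simp
    have ul: "u $ l \<le> W * u $ k" for l
    proof -
      have "u $ l \<le> t * w $ l" by (rule utw)
      also have "\<dots> = u $ k * (w $ l / w $ k)" using k by simp
      also have "\<dots> \<le> u $ k * W" using WW[of l k] up[of k] by (intro mult_left_mono) auto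
      finally show ?thesis by (simp add: mult.commute)
    qed
    show "\<exists>c\<in>C. \<forall>l. u $ l \<le> A * \<epsilon> + W * u $ c"
    proof (cases "k \<in> C")
      case True
      have "u $ l \<le> A * \<epsilon> + W * u $ k" for l using ul[of l] A0 e0
        by (meson add_increasing mult_nonneg_nonneg)
      thus ?thesis using True by blast
    next
      case False
      have "f u $ k \<le> f (t *\<^sub>R w) $ k" using utw u pos_scale[OF w t0] by (intro fmono) auto
      also have "\<dots> = t * f w $ k" using fhom[OF w t0] by simp
      also have "\<dots> \<le> t * (\<sigma> * w $ k)" using wJ False t0 by (intro mult_left_mono) auto
      also have "\<dots> = \<sigma> * u $ k" using tk by (simp add: algebra_simps)
      finally have "lam * (u $ k - \<epsilon>) \<le> \<sigma> * u $ k" using fu[of k] by simp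
      hence "(lam - \<sigma>) * u $ k \<le> lam * \<epsilon>" by (simp add: algebra_simps)
      moreover have "(\<rho> - \<sigma>) * u $ k \<le> (lam - \<sigma>) * u $ k" using lr up[of k] by (intro mult_right_mono) auto
      moreover have "lam * \<epsilon> \<le> L * \<epsilon>" using lL e0 by (intro mult_right_mono) auto
      ultimately have "(\<rho> - \<sigma>) * u $ k \<le> L * \<epsilon>" by linarith
      hence uk: "u $ k \<le> L * \<epsilon> / (\<rho> - \<sigma>)" using dpos by (simp add: le_divide_eq mult.commute)
      obtain c where c: "c \<in> C" using Cne by blast
      have "u $ l \<le> A * \<epsilon> + W * u $ c" for l
      proof -
        have "u $ l \<le> W * u $ k" by (rule ul)
        also have "\<dots> \<le> W * (L * \<epsilon> / (\<rho> - \<sigma>))" using uk W0 by (intro mult_left_mono)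
        also have "\<dots> = A * \<epsilon>" by (simp add: A_def)
        also have "\<dots> \<le> A * \<epsilon> + W * u $ c" using W0 up[of c] by simp
        finally show ?thesis .
      qed
      thus ?thesis using c by blast
    qed
  qed
qed


lemma main_bound:
  assumes fc: "final_class f C" and uniq: "\<forall>D. final_class f D \<longrightarrow> D = C"
    and rlt: "cw_radius (trunc0 f (UNIV - C)) < cw_radius f" and rL: "cw_radius f \<le> L"
  shows "\<exists>A B. 0 \<le> A \<and> 0 < B \<and> (\<forall>u lam \<epsilon>. pos_vec u \<and> 0 \<le> \<epsilon> \<and> cw_radius f \<le> lam \<and> lam \<le> L
      \<and> (\<forall>k. f u $ k = lam * (u $ k - \<epsilon>)) \<and> 2 * (A * \<epsilon>) \<le> Max (range (\<lambda>k. u $ k))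
      \<longrightarrow> (\<forall>l k. u $ l \<le> B * u $ k))"
proof -
  have L0: "0 \<le> L" using rL rho_pos by simp
  have Cne: "C \<noteq> {}" using fc by (simp add: final_class_def)
  obtain w \<sigma> where ws: "pos_vec w" "0 \<le> \<sigma>" "\<sigma> < cw_radius f" "\<forall>i. i \<notin> C \<longrightarrow> f w $ i \<le> \<sigma> * w $ i"
    using J_witness[OF rlt] by blast
  obtain A W where AW: "0 \<le> A" "0 \<le> W" and AWp: "\<And>u lam \<epsilon>. pos_vec u \<Longrightarrow> 0 \<le> \<epsilon> \<Longrightarrow> cw_radius f \<le> lam \<Longrightarrow> lam \<le> L
      \<Longrightarrow> (\<forall>k. f u $ k = lam * (u $ k - \<epsilon>)) \<Longrightarrow> (\<exists>c\<in>C. \<forall>l. u $ l \<le> A * \<epsilon> + W * u $ c)"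
    using J_bound[OF ws Cne L0] by blast
  obtain Br where Br: "\<And>k c u m. c \<in> C \<Longrightarrow> goodv L u m \<Longrightarrow> u $ k \<le> m \<Longrightarrow> u $ c \<le> Br * m"
    using reach_C_bound[OF fc uniq, of L] by blast
  define B where "B = max 1 (2 * W * Br)"
  show ?thesis
  proof (rule exI[of _ A], rule exI[of _ B], intro conjI allI impI AW)
    show "0 < B" by (simp add: B_def)
    fix u lam \<epsilon> l k
    assume H: "pos_vec u \<and> 0 \<le> \<epsilon> \<and> cw_radius f \<le> lam \<and> lam \<le> L
      \<and> (\<forall>k. f u $ k = lam * (u $ k - \<epsilon>)) \<and> 2 * (A * \<epsilon>) \<le> Max (range (\<lambda>k. u $ k))"
    hence u: "pos_vec u" and e0: "0 \<le> \<epsilon>" and lr: "cw_radius f \<le> lam" and lL: "lam \<le> L"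
      and fu: "\<forall>k. f u $ k = lam * (u $ k - \<epsilon>)" and small: "2 * (A * \<epsilon>) \<le> Max (range (\<lambda>k. u $ k))"
      by auto
    have up: "0 < u $ i" for i using u by (simp add: pos_vec_def)
    have lam0: "0 < lam" using lr rho_pos by simp
    define m where "m = Min (range (\<lambda>k. u $ k))"
    have "m \<in> range (\<lambda>k. u $ k)" unfolding m_def by (rule Min_in) auto
    then obtain k0 where k0: "u $ k0 = m" by auto
    have mle: "m \<le> u $ i" for i unfolding m_def by (rule Min_le) auto
    define M where "M = Max (range (\<lambda>k. u $ k))"
    have Mge: "u $ i \<le> M" for i unfolding M_def by (rule Max_ge) auto
    have good: "goodv L u m"
      unfolding goodv_def
    proof (intro conjI allI L0 u)
      fix i
      have "f u $ i = lam * (u $ i - \<epsilon>)" using fu by simp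
      also have "\<dots> \<le> lam * u $ i" using lam0 e0 by (intro mult_left_mono) auto
      also have "\<dots> \<le> L * u $ i" using lL up[of i] by (intro mult_right_mono) auto
      finally show "f u $ i \<le> L * u $ i" .
      show "0 < m" using k0 up[of k0] by simp
      show "m \<le> u $ i" by (rule mle)
    qed
    obtain c where c: "c \<in> C" "\<And>l. u $ l \<le> A * \<epsilon> + W * u $ c"
      using AWp[OF u e0 lr lL fu] by blast
    have uc: "u $ c \<le> Br * m" using Br[OF c(1) good, of k0] k0 by simp
    have "M \<in> range (\<lambda>k. u $ k)" unfolding M_def by (rule Max_in) auto
    then obtain l0 where l0: "u $ l0 = M" by auto
    have "M \<le> A * \<epsilon> + W * u $ c" using c(2)[of l0] l0 by simp
    also have "\<dots> \<le> A * \<epsilon> + W * (Br * m)" using uc AW by (simp add: mult_left_mono)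
    finally have "M \<le> A * \<epsilon> + W * (Br * m)" .
    moreover have "2 * (A * \<epsilon>) \<le> M" using small by (simp add: M_def)
    ultimately have "M \<le> 2 * W * Br * m" by (simp add: algebra_simps)
    also have "\<dots> \<le> B * m" using k0 up[of k0] by (intro mult_right_mono) (auto simp: B_def)
    also have "\<dots> \<le> B * u $ k" using mle[of k] by (intro mult_left_mono) (auto simp: B_def)
    finally show "u $ l \<le> B * u $ k" using Mge[of l] by simp
  qed
qed


lemma approx_eig:
  assumes e: "0 < \<epsilon>"
  shows "\<exists>x lam. (\<forall>i. 0 \<le> x $ i \<and> x $ i \<le> 1) \<and> sum (\<lambda>i. x $ i) UNIV = 1 \<and> 0 < lam
     \<and> f (x + \<epsilon> *\<^sub>R one) = lam *\<^sub>R x"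
proof -
  define F where "F x = f (x + \<epsilon> *\<^sub>R one)" for x
  define N where "N x = inverse (sum (\<lambda>i. F x $ i) UNIV) *\<^sub>R F x" for x
  define S where "S = cbox (0::real^'n) one"
  have inS: "x \<in> S \<longleftrightarrow> (\<forall>i. 0 \<le> x $ i \<and> x $ i \<le> 1)" for x
    by (simp add: S_def mem_box_cart one_def)
  have ppos: "pos_vec (x + \<epsilon> *\<^sub>R one)" if "x \<in> S" for x
    using that e by (auto simp: inS pos_vec_def one_def add_nonneg_pos)
  have Fpos: "0 < F x $ i" if "x \<in> S" for x i
    using fpos[OF ppos[OF that]] by (simp add: F_def pos_vec_def)
  have sumpos: "0 < sum (\<lambda>i. F x $ i) UNIV" if "x \<in> S" for x
    using Fpos[OF that] by (intro sum_pos) auto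
  have cont: "continuous_on S N"
  proof (rule continuous_at_imp_continuous_on, rule ballI)
    fix x assume x: "x \<in> S"
    have c1: "isCont (\<lambda>x. x + \<epsilon> *\<^sub>R one) x" by (intro continuous_intros)
    have cF: "isCont F x" unfolding F_def using isCont_o2[OF c1 fcont[OF ppos[OF x]]] .
    show "isCont N x" unfolding N_def
      using sumpos[OF x] by (intro continuous_intros cF) auto
  qed
  have img: "N \<in> S \<rightarrow> S"
  proof
    fix x assume x: "x \<in> S"
    show "N x \<in> S" unfolding inS
    proof
      fix i
      have le: "F x $ i \<le> sum (\<lambda>i. F x $ i) UNIV"
        using Fpos[OF x] by (intro member_le_sum) (auto intro: less_imp_le)
      show "0 \<le> N x $ i \<and> N x $ i \<le> 1" using Fpos[OF x, of i] sumpos[OF x] le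
        by (auto simp: N_def field_simps)
    qed
  qed
  have Sne: "S \<noteq> {}" using inS[of 0] by auto
  obtain x where x: "x \<in> S" "N x = x"
    using brouwer[of S N] cont img Sne unfolding S_def by (auto simp: compact_cbox convex_box(1))
  define lam where "lam = sum (\<lambda>i. F x $ i) UNIV"
  have l0: "0 < lam" using sumpos[OF x(1)] by (simp add: lam_def)
  have Fx: "F x = lam *\<^sub>R x"
  proof -
    have "lam *\<^sub>R x = lam *\<^sub>R N x" using x(2) by simp
    also have "\<dots> = F x" using l0 by (simp add: N_def lam_def)
    finally show ?thesis by simp
  qed
  have "sum (\<lambda>i. x $ i) UNIV = sum (\<lambda>i. F x $ i / lam) UNIV" using Fx l0 by simp
  also have "\<dots> = 1" using l0 by (simp add: sum_divide_distrib[symmetric] lam_def)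
  finally have s1: "sum (\<lambda>i. x $ i) UNIV = 1" .
  show ?thesis using x(1) s1 l0 Fx by (intro exI[of _ x] exI[of _ lam]) (auto simp: inS F_def)
qed


lemma exists_eig:
  assumes fc: "final_class f C" and uniq: "\<forall>D. final_class f D \<longrightarrow> D = C"
    and rlt: "cw_radius (trunc0 f (UNIV - C)) < cw_radius f"
  shows "\<exists>x. pos_vec x \<and> (\<exists>\<mu>. f x = \<mu> *\<^sub>R x)"
proof -
  define \<rho> where "\<rho> = cw_radius f"
  define L where "L = 2 * sum (\<lambda>i. f one $ i) UNIV"
  have fop: "0 < f one $ i" for i using fpos[OF one_pos] by (simp add: pos_vec_def)
  have rL: "\<rho> \<le> L" unfolding \<rho>_def
  proof (rule cw_upper[OF one_pos])
    fix i
    have "f one $ i \<le> sum (\<lambda>i. f one $ i) UNIV" using fop by (intro member_le_sum) (auto intro: less_imp_le)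
    moreover have "0 \<le> sum (\<lambda>i. f one $ i) UNIV" using fop by (intro sum_nonneg) (auto intro: less_imp_le)
    ultimately show "f one $ i \<le> L * one $ i" by (simp add: L_def one_def)
  qed
  obtain A B where AB: "0 \<le> A" "0 < B" and ABp: "\<And>u lam \<epsilon>. pos_vec u \<and> 0 \<le> \<epsilon> \<and> cw_radius f \<le> lam \<and> lam \<le> L
      \<and> (\<forall>k. f u $ k = lam * (u $ k - \<epsilon>)) \<and> 2 * (A * \<epsilon>) \<le> Max (range (\<lambda>k. u $ k))
      \<Longrightarrow> (\<forall>l k. u $ l \<le> B * u $ k)"
    using main_bound[OF fc uniq rlt rL[unfolded \<rho>_def]] by blast
  define n where "n = real CARD('n)"
  have n1: "1 \<le> n" unfolding n_def by (simp add: Suc_le_eq)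
  define \<delta> where "\<delta> = 1 / (2 * n * B)"
  have d0: "0 < \<delta>" using n1 AB by (simp add: \<delta>_def)
  define \<epsilon>0 where "\<epsilon>0 = min 1 (min \<delta> (1 / (2 * n * (A + 1))))"
  have "0 < 2 * n * (A + 1)" using n1 AB by (intro mult_pos_pos) auto
  hence e00: "0 < \<epsilon>0" using d0 by (simp add: \<epsilon>0_def)
  have claim: "\<exists>x lam. (\<forall>i. \<delta> \<le> x $ i \<and> x $ i \<le> 1) \<and> \<rho> \<le> lam \<and> lam \<le> L \<and> f (x + \<epsilon> *\<^sub>R one) = lam *\<^sub>R x"
    if e: "0 < \<epsilon>" "\<epsilon> \<le> \<epsilon>0" for \<epsilon>
  proof -
    obtain x lam where x: "\<And>i. 0 \<le> x $ i \<and> x $ i \<le> 1" "sum (\<lambda>i. x $ i) UNIV = 1" "0 < lam"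
      "f (x + \<epsilon> *\<^sub>R one) = lam *\<^sub>R x"
      using approx_eig[OF e(1)] by blast
    define u where "u = x + \<epsilon> *\<^sub>R one"
    have uc: "u $ i = x $ i + \<epsilon>" for i by (simp add: u_def one_def)
    have up: "0 < u $ i" for i using x(1)[of i] e(1) by (simp add: uc add_nonneg_pos)
    have u: "pos_vec u" using up by (simp add: pos_vec_def)
    have fu: "f u $ k = lam * (u $ k - \<epsilon>)" for k using x(4) by (simp add: u_def[symmetric] uc)
    have lr: "\<rho> \<le> lam" unfolding \<rho>_def
    proof (rule cw_upper[OF u])
      fix i show "f u $ i \<le> lam * u $ i" using fu[of i] x(3) e(1) by (simp add: uc algebra_simps)
    qed
    have e1: "\<epsilon> \<le> 1" using e(2) by (simp add: \<epsilon>0_def)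
    have lL: "lam \<le> L"
    proof -
      have two: "pos_vec ((2::real) *\<^sub>R one)" by (rule pos_scale[OF one_pos]) simp
      have "f u $ i \<le> f ((2::real) *\<^sub>R one) $ i" for i
      proof (rule fmono[OF u two])
        fix k have "x $ k + \<epsilon> \<le> 1 + 1" using x(1)[of k] e1 by (intro add_mono) auto
        thus "u $ k \<le> ((2::real) *\<^sub>R one) $ k" by (simp add: uc one_def)
      qed
      hence "f u $ i \<le> 2 * f one $ i" for i using fhom[OF one_pos, of 2] by simp
      hence "sum (\<lambda>i. f u $ i) UNIV \<le> sum (\<lambda>i. 2 * f one $ i) UNIV" by (intro sum_mono)
      moreover have "sum (\<lambda>i. f u $ i) UNIV = lam" using x(4) x(2)
        by (simp add: u_def sum_distrib_left[symmetric])
      ultimately show ?thesis by (simp add: L_def sum_distrib_left)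
    qed
    define M where "M = Max (range (\<lambda>k. u $ k))"
    have Mge: "u $ i \<le> M" for i unfolding M_def by (rule Max_ge) auto
    have "1 \<le> sum (\<lambda>i. u $ i) UNIV" using x(2) e(1) by (simp add: uc sum.distrib)
    also have "\<dots> \<le> n * M" using sum_bounded_above[of UNIV "\<lambda>i. u $ i" M] Mge by (simp add: n_def)
    finally have nM: "1 \<le> n * M" .
    have "2 * (A * \<epsilon>) \<le> 2 * ((A + 1) * \<epsilon>)" using e(1) by simp
    also have "\<dots> \<le> 2 * ((A + 1) * (1 / (2 * n * (A + 1))))"
      using e(2) AB by (intro mult_left_mono) (auto simp: \<epsilon>0_def)
    also have "\<dots> = 1 / n"
    proof -
      have "A + 1 \<noteq> 0" "n \<noteq> 0" using AB n1 by auto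
      moreover have "0 < n * 2 + A * (n * 2)" using AB n1 by (intro add_pos_nonneg) auto
      ultimately show ?thesis by (simp add: field_simps)
    qed
    also have "\<dots> \<le> M" using nM n1 by (simp add: field_simps)
    finally have small: "2 * (A * \<epsilon>) \<le> M" .
    have bnd: "\<forall>l k. u $ l \<le> B * u $ k"
      using ABp[of u \<epsilon> lam] u e(1) lr lL fu small unfolding \<rho>_def M_def by auto
    have xlow: "\<delta> \<le> x $ k" for k
    proof -
      have "1 \<le> sum (\<lambda>i. u $ i) UNIV" using x(2) e(1) by (simp add: uc sum.distrib)
      also have "\<dots> \<le> n * (B * u $ k)" using sum_bounded_above[of UNIV "\<lambda>i. u $ i" "B * u $ k"] bnd by (simp add: n_def)
      finally have "1 \<le> n * B * u $ k" by (simp add: mult.assoc)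
      hence "1 / (n * B) \<le> u $ k" using n1 AB by (simp add: field_simps)
      moreover have "\<epsilon> \<le> \<delta>" using e(2) by (simp add: \<epsilon>0_def)
      moreover have "1 / (n * B) = 2 * \<delta>" using n1 AB by (simp add: \<delta>_def field_simps)
      ultimately show ?thesis using uc[of k] by simp
    qed
    show ?thesis using xlow x(1) lr lL x(4) by blast
  qed
  define eps where "eps k = \<epsilon>0 * inverse (real (Suc k))" for k
  have epsp: "0 < eps k" "eps k \<le> \<epsilon>0" for k
    using e00 by (auto simp: eps_def field_simps)
  define K where "K = cbox (\<delta> *\<^sub>R one) one \<times> {\<rho>..L}"
  have inK: "p \<in> K \<longleftrightarrow> (\<forall>i. \<delta> \<le> fst p $ i \<and> fst p $ i \<le> 1) \<and> \<rho> \<le> snd p \<and> snd p \<le> L" for p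
    by (cases p) (simp add: K_def mem_box_cart one_def)
  have "\<forall>k. \<exists>p. p \<in> K \<and> f (fst p + eps k *\<^sub>R one) = snd p *\<^sub>R fst p"
  proof
    fix k
    obtain x lam where "(\<forall>i. \<delta> \<le> x $ i \<and> x $ i \<le> 1) \<and> \<rho> \<le> lam \<and> lam \<le> L \<and> f (x + eps k *\<^sub>R one) = lam *\<^sub>R x"
      using claim[OF epsp(1)[of k] epsp(2)[of k]] by blast
    thus "\<exists>p. p \<in> K \<and> f (fst p + eps k *\<^sub>R one) = snd p *\<^sub>R fst p"
      by (intro exI[of _ "(x, lam)"]) (simp add: inK)
  qed
  then obtain P where P: "\<And>k. P k \<in> K" "\<And>k. f (fst (P k) + eps k *\<^sub>R one) = snd (P k) *\<^sub>R fst (P k)"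
    by metis
  have "compact K" unfolding K_def by (intro compact_Times compact_cbox compact_Icc)
  then obtain l r where l: "l \<in> K" "strict_mono r" "(P \<circ> r) \<longlonglongrightarrow> l"
    using seq_compactE[OF compact_imp_seq_compact, of K P] P(1) by blast
  define xs where "xs = fst l"
  define ls where "ls = snd l"
  have xpos: "pos_vec xs" using l(1) d0 unfolding inK pos_vec_def xs_def by (meson less_le_trans)
  have tx: "(\<lambda>k. fst (P (r k))) \<longlonglongrightarrow> xs"
    using tendsto_fst[OF l(3)] by (simp add: xs_def o_def)
  have tl: "(\<lambda>k. snd (P (r k))) \<longlonglongrightarrow> ls"
    using tendsto_snd[OF l(3)] by (simp add: ls_def o_def)
  have te: "(\<lambda>k. eps (r k)) \<longlonglongrightarrow> 0"
  proof -
    have "eps \<longlonglongrightarrow> \<epsilon>0 * 0" unfolding eps_def by (intro tendsto_mult tendsto_const LIMSEQ_inverse_real_of_nat)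
    hence "eps \<longlonglongrightarrow> 0" by simp
    from LIMSEQ_subseq_LIMSEQ[OF this l(2)] show ?thesis by (simp add: o_def)
  qed
  have "(\<lambda>k. fst (P (r k)) + eps (r k) *\<^sub>R one) \<longlonglongrightarrow> xs + 0 *\<^sub>R one"
    by (intro tendsto_intros tx te)
  hence "(\<lambda>k. f (fst (P (r k)) + eps (r k) *\<^sub>R one)) \<longlonglongrightarrow> f xs"
    using isCont_tendsto_compose[OF fcont[OF xpos]] by simp
  hence t1: "(\<lambda>k. snd (P (r k)) *\<^sub>R fst (P (r k))) \<longlonglongrightarrow> f xs" using P(2) by simp
  have t2: "(\<lambda>k. snd (P (r k)) *\<^sub>R fst (P (r k))) \<longlonglongrightarrow> ls *\<^sub>R xs"
    by (intro tendsto_intros tx tl)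
  have "f xs = ls *\<^sub>R xs" using LIMSEQ_unique[OF t1 t2] .
  thus ?thesis using xpos by blast
qed


lemma eig_value:
  assumes x: "pos_vec x" and fx: "f x = \<mu> *\<^sub>R x"
  shows "\<mu> = cw_radius f"
proof -
  have "cw_radius f \<le> \<mu>" by (rule cw_upper[OF x]) (simp add: fx)
  moreover have "\<mu> \<le> cw_radius f" by (rule cw_lower[OF x]) (simp add: fx)
  ultimately show ?thesis by simp
qed

lemma eig_bounded:
  assumes fc: "final_class f C" and uniq: "\<forall>D. final_class f D \<longrightarrow> D = C"
    and rlt: "cw_radius (trunc0 f (UNIV - C)) < cw_radius f"
  shows "\<exists>M. \<forall>x\<in>eigenspace_pos f. \<forall>y\<in>eigenspace_pos f. hilbert_dist x y \<le> M"
proof -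
  obtain A B where AB: "0 \<le> A" "0 < B" and ABp: "\<And>u lam \<epsilon>. pos_vec u \<and> 0 \<le> \<epsilon> \<and> cw_radius f \<le> lam \<and> lam \<le> cw_radius f
      \<and> (\<forall>k. f u $ k = lam * (u $ k - \<epsilon>)) \<and> 2 * (A * \<epsilon>) \<le> Max (range (\<lambda>k. u $ k))
      \<Longrightarrow> (\<forall>l k. u $ l \<le> B * u $ k)"
    using main_bound[OF fc uniq rlt order.refl] by blast
  have bd: "x $ l \<le> B * x $ k" if x: "x \<in> eigenspace_pos f" for x l k
  proof -
    obtain \<mu> where xp: "pos_vec x" and fx: "f x = \<mu> *\<^sub>R x" using x by (auto simp: eigenspace_pos_def)
    have mu: "\<mu> = cw_radius f" by (rule eig_value[OF xp fx])
    have "0 < x $ l" using xp by (simp add: pos_vec_def)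
    also have "x $ l \<le> Max (range (\<lambda>k. x $ k))" by (rule Max_ge) auto
    finally have "2 * (A * 0) \<le> Max (range (\<lambda>k. x $ k))" by simp
    moreover have "\<forall>k. f x $ k = cw_radius f * (x $ k - 0)" using fx mu by simp
    ultimately have "pos_vec x \<and> 0 \<le> (0::real) \<and> cw_radius f \<le> cw_radius f \<and> cw_radius f \<le> cw_radius f
      \<and> (\<forall>k. f x $ k = cw_radius f * (x $ k - 0)) \<and> 2 * (A * 0) \<le> Max (range (\<lambda>k. x $ k))"
      using xp by simp
    from ABp[OF this] show ?thesis by blast
  qed
  show ?thesis
  proof (intro exI[of _ "ln (B * B)"] ballI)
    fix x y assume x: "x \<in> eigenspace_pos f" and y: "y \<in> eigenspace_pos f"
    have xp: "0 < x $ i" and yp: "0 < y $ i" for i using x y by (auto simp: eigenspace_pos_def pos_vec_def)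
    define G where "G = {(y $ i * x $ j) / (x $ i * y $ j) | i j. True}"
    have Geq: "G = (\<lambda>p. (y $ fst p * x $ snd p) / (x $ fst p * y $ snd p)) ` UNIV"
    proof
      show "G \<subseteq> (\<lambda>p. (y $ fst p * x $ snd p) / (x $ fst p * y $ snd p)) ` UNIV"
      proof
        fix g assume "g \<in> G"
        then obtain i j where "g = (y $ i * x $ j) / (x $ i * y $ j)" by (auto simp: G_def)
        thus "g \<in> (\<lambda>p. (y $ fst p * x $ snd p) / (x $ fst p * y $ snd p)) ` UNIV"
          by (intro image_eqI[of _ _ "(i, j)"]) auto
      qed
    qed (auto simp: G_def)
    have Gfin: "finite G" "G \<noteq> {}" by (auto simp: Geq)
    have Gle: "g \<le> B * B" if "g \<in> G" for g
    proof -
      obtain i j where g: "g = (y $ i * x $ j) / (x $ i * y $ j)" using \<open>g \<in> G\<close> by (auto simp: G_def)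
      have "y $ i * x $ j \<le> (B * y $ j) * (B * x $ i)"
        using bd[OF y, of i j] bd[OF x, of j i] xp yp AB by (intro mult_mono) (auto intro: less_imp_le)
      also have "\<dots> = B * B * (x $ i * y $ j)" by (simp add: algebra_simps)
      finally show ?thesis using g xp[of i] yp[of j] by (simp add: divide_le_eq)
    qed
    have Gpos: "0 < Max G"
    proof -
      obtain i j :: 'n where True by simp
      have "(y $ i * x $ j) / (x $ i * y $ j) \<in> G" by (auto simp: G_def)
      moreover have "0 < (y $ i * x $ j) / (x $ i * y $ j)" using xp yp by simp
      ultimately show ?thesis using Gfin by (meson Max_ge less_le_trans)
    qed
    have "Max G \<le> B * B" using Gfin Gle by simp
    hence "ln (Max G) \<le> ln (B * B)" using Gpos by simp
    thus "hilbert_dist x y \<le> ln (B * B)" by (simp add: hilbert_dist_def G_def)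
  qed
qed

end

theorem theorem3p11:
  fixes f :: "real^'n \<Rightarrow> real^'n" and C :: "'n set"
  assumes "\<forall>x. pos_vec x \<longrightarrow> pos_vec (f x)"
    and "order_preserving_pos f"
    and "homogeneous_pos f"
    and "final_class f C"
    and "\<forall>D. final_class f D \<longrightarrow> D = C"
    and "cw_radius (trunc0 f (UNIV - C)) < cw_radius f"
  shows "eigenspace_pos f \<noteq> {} \<and>
         (\<exists>M. \<forall>x\<in>eigenspace_pos f. \<forall>y\<in>eigenspace_pos f. hilbert_dist x y \<le> M)"
proof -
  interpret ophom f
  proof
    show "\<And>x. pos_vec x \<Longrightarrow> pos_vec (f x)" using assms(1) by blast
    show "\<And>x y i. pos_vec x \<Longrightarrow> pos_vec y \<Longrightarrow> (\<And>k. x $ k \<le> y $ k) \<Longrightarrow> f x $ i \<le> f y $ i"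
      using assms(2) unfolding order_preserving_pos_def by blast
    show "\<And>x t. pos_vec x \<Longrightarrow> 0 < t \<Longrightarrow> f (t *\<^sub>R x) = t *\<^sub>R f x"
      using assms(3) unfolding homogeneous_pos_def by blast
  qed
  have "eigenspace_pos f \<noteq> {}"
    using exists_eig[OF assms(4,5,6)] by (auto simp: eigenspace_pos_def)
  moreover have "\<exists>M. \<forall>x\<in>eigenspace_pos f. \<forall>y\<in>eigenspace_pos f. hilbert_dist x y \<le> M"
    by (rule eig_bounded[OF assms(4,5,6)])
  ultimately show ?thesis by blast
qed

end
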